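(* Assume the setting described in the context, and fix a motion parameter $x=(x_R,x_T)\in\mathbb{R}\times\mathbb{R}^2$. Suppose that for every $i\in\{1,\dots,N\}$ the point $a_i$ and its match $a_{\pi(x,i)}$ lie on the same curve $\gamma^{(i)}$ of the environment, and that $\kappa\,|s_i-s_{\pi(x,i)}|\le 1$. Define the cost with matching frozen at its value for $x=0$, $$J_{\mathrm{fix}}(x):=\sum_{i=1}^N\big[(a_i+d_i(x)-a_{\pi(0,i)})\cdot n_i\big]^2=\sum_{i=1}^N \big(d_i(x)\cdot n_i\big)^2 .$$ This is a quadratic form in $x$. It coincides with the second-order Taylor expansion at $x=0$ of the cost with frozen matching, whose value and gradient at $0$ vanish. Define also the true (rematched) point-to-plane ICP cost $$J_{\mathrm{ICP}}(x):=\sum_{i=1}^N\big[(a_i+d_i(x)-a_{\pi(x,i)})\cdot n_i\big]^2 .$$ Then $$|J_{\mathrm{ICP}}(x)-J_{\mathrm{fix}}(x)|\le \sum_{i=1}^N\Big(16\,\kappa\,\|d_i(x)\|^3+64\,\kappa^2\,\|d_i(x)\|^4\Big).$$ Consequently $J_{\mathrm{ICP}}(x)=J_{\mathrm{fix}}(x)+O(\kappa\|x\|^3)$, even for displacements large enough that rematching occurs ($\pi(x,\cdot)\neq\pi(0,\cdot)$). In particular, if $\kappa=0$ (environment made of straight segments/lines), then $J_{\mathrm{ICP}}(x)=J_{\mathrm{fix}}(x)$ exactly.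
   Context: 2D setting. The environment is a finite union of pairwise disjoint $C^2$ curves in $\mathbb{R}^2$. Each curve $\gamma$ is parametrized by arc length $s$, so $\|\gamma'(s)\|=1$, and has curvature bounded by $\kappa\ge 0$, i.e. $\|\gamma''(s)\|\le\kappa$ for all $s$. A point cloud $a_1,\dots,a_N\in\mathbb{R}^2$ consists of distinct points on these curves. Write $a_k=\gamma(s_k)$, where $s_k$ is the arc-length abscissa of $a_k$ on the curve containing it. For each $i$, $n_i$ is a unit normal vector to that curve at $a_i$, so $n_i\cdot\gamma'(s_i)=0$. For a motion parameter $x=(x_R,x_T)\in\mathbb{R}\times\mathbb{R}^2$, the linearized displacement of $a_i$ is $d_i(x):=x_R\times a_i+x_T$. Here, for a scalar $x_R$ and $a=(a^1,a^2)$, $x_R\times a:=x_R(-a^2,a^1)$. Thus the displaced cloud is $\{a_i+d_i(x)\}$. $\pi(x,i)$ denotes an index $j\in\{1,\dots,N\}$ minimizing $\|a_i+d_i(x)-a_j\|$, i.e. closest-point matching of the displaced point to the original cloud. Note $\pi(0,i)=i$. *)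

theory Defs
  imports "HOL-Analysis.Analysis"
begin

text \<open>Planar "cross product" of a scalar rotation parameter with a point:
  xR \<times> a = xR (-a2, a1).\<close>
definition scross :: "real \<Rightarrow> real^2 \<Rightarrow> real^2" where
  "scross xR a = xR *\<^sub>R vector [- (a $ 2), a $ 1]"

text \<open>Linearized displacement d(x) of a point a for x = (xR, xT).\<close>
definition disp :: "real \<Rightarrow> real^2 \<Rightarrow> real^2 \<Rightarrow> real^2" where
  "disp xR xT a = scross xR a + xT"

definition environment ::
  "nat \<Rightarrow> (nat \<Rightarrow> real set) \<Rightarrow> (nat \<Rightarrow> real \<Rightarrow> real^2) \<Rightarrow> (nat \<Rightarrow> real \<Rightarrow> real^2)
   \<Rightarrow> (nat \<Rightarrow> real \<Rightarrow> real^2) \<Rightarrow> real \<Rightarrow> bool" where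
  "environment M D gam gam1 gam2 kappa \<longleftrightarrow>
     kappa \<ge> 0 \<and>
     (\<forall>c<M. is_interval (D c) \<and> interior (D c) \<noteq> {} \<and>
        (\<forall>t\<in>D c. (gam c has_vector_derivative gam1 c t) (at t within D c)) \<and>
        (\<forall>t\<in>D c. (gam1 c has_vector_derivative gam2 c t) (at t within D c)) \<and>
        continuous_on (D c) (gam2 c) \<and>
        (\<forall>t\<in>D c. norm (gam1 c t) = 1) \<and>
        (\<forall>t\<in>D c. norm (gam2 c t) \<le> kappa)) \<and>
     (\<forall>c<M. \<forall>c'<M. c \<noteq> c' \<longrightarrow> gam c ` D c \<inter> gam c' ` D c' = {})"

definition point_cloud ::
  "nat \<Rightarrow> (nat \<Rightarrow> real set) \<Rightarrow> (nat \<Rightarrow> real \<Rightarrow> real^2) \<Rightarrow> (nat \<Rightarrow> real \<Rightarrow> real^2)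
   \<Rightarrow> nat \<Rightarrow> (nat \<Rightarrow> real^2) \<Rightarrow> (nat \<Rightarrow> nat) \<Rightarrow> (nat \<Rightarrow> real) \<Rightarrow> (nat \<Rightarrow> real^2) \<Rightarrow> bool" where
  "point_cloud M D gam gam1 N a cv s n \<longleftrightarrow>
     inj_on a {..<N} \<and>
     (\<forall>k<N. cv k < M \<and> s k \<in> D (cv k) \<and> a k = gam (cv k) (s k) \<and>
        norm (n k) = 1 \<and> n k \<bullet> gam1 (cv k) (s k) = 0)"

definition closest_matching ::
  "nat \<Rightarrow> (nat \<Rightarrow> real^2) \<Rightarrow> real \<Rightarrow> real^2 \<Rightarrow> (nat \<Rightarrow> nat) \<Rightarrow> bool" where
  "closest_matching N a xR xT p \<longleftrightarrow>
     (\<forall>i<N. p i < N \<and>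
        (\<forall>j<N. norm (a i + disp xR xT (a i) - a (p i)) \<le> norm (a i + disp xR xT (a i) - a j)))"

text \<open>Cost with matching frozen at x = 0 (where pi(0,i) = i).\<close>
definition J_fix :: "nat \<Rightarrow> (nat \<Rightarrow> real^2) \<Rightarrow> (nat \<Rightarrow> real^2) \<Rightarrow> real \<Rightarrow> real^2 \<Rightarrow> real" where
  "J_fix N a n xR xT = (\<Sum>i<N. (disp xR xT (a i) \<bullet> n i)^2)"

definition J_ICP ::
  "nat \<Rightarrow> (nat \<Rightarrow> real^2) \<Rightarrow> (nat \<Rightarrow> real^2) \<Rightarrow> (nat \<Rightarrow> nat) \<Rightarrow> real \<Rightarrow> real^2 \<Rightarrow> real" where
  "J_ICP N a n p xR xT = (\<Sum>i<N. ((a i + disp xR xT (a i) - a (p i)) \<bullet> n i)^2)"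

end

theory Submission
  imports Defs
begin

lemma T2_pos:
  fixes f f1 f2 :: "real \<Rightarrow> real"
  assumes S: "is_interval S"
    and d1: "\<And>t. t\<in>S \<Longrightarrow> (f has_real_derivative f1 t) (at t within S)"
    and d2: "\<And>t. t\<in>S \<Longrightarrow> (f1 has_real_derivative f2 t) (at t within S)"
    and K: "\<And>t. t\<in>S \<Longrightarrow> \<bar>f2 t\<bar> \<le> K"
    and u: "u \<in> S" and v: "v \<in> S"
  shows "f v - f u - f1 u * (v - u) \<le> K * (v - u)^2 / 2"
proof -
  have cS: "convex S" using S by (simp add: is_interval_convex)
  have b1: "\<bar>f1 r - f1 u\<bar> \<le> K * \<bar>r - u\<bar>" if "r \<in> S" for r
    using field_differentiable_bound[OF cS d2, of K r u] K that u by simp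
  define phi where "phi r = f r - f u - f1 u * (r - u) - K * (r - u)^2 / 2" for r
  have dphi: "(phi has_real_derivative (f1 r - f1 u - K * (r - u))) (at r within S)" if "r \<in> S" for r
  proof -
    have "(phi has_real_derivative (f1 r - 0 - f1 u * (1 - 0) - K * ((1-0)*(r-u) + (1-0)*(r-u)) / 2)) (at r within S)"
      unfolding phi_def power2_eq_square by (intro derivative_intros DERIV_cmult DERIV_cdivide DERIV_mult d1[OF that])
    then show ?thesis by (rule DERIV_cong) (simp add: field_simps)
  qed
  have sub1: "{u..v} \<subseteq> S" "{v..u} \<subseteq> S"
    using S u v unfolding is_interval_1 atLeastAtMost_iff subset_iff by blast+
  show ?thesis
  proof (cases u v rule: linorder_cases)
    case less
    have "\<exists>x\<in>{u<..<v}. phi v - phi u = (\<lambda>h. (f1 x - f1 u - K * (x - u)) * h) (v - u)"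
    proof (rule mvt_simple[OF less])
      fix x assume "u \<le> x" "x \<le> v"
      then have xS: "x \<in> S" using sub1 by auto
      have "{u..v} \<subseteq> S" using sub1 by auto
      from has_derivative_subset[OF dphi[OF xS, unfolded has_field_derivative_def] this]
      show "(phi has_derivative (\<lambda>h. (f1 x - f1 u - K * (x - u)) * h)) (at x within {u..v})"
        .
    qed
    then obtain x where x: "x \<in> {u<..<v}" "phi v - phi u = (f1 x - f1 u - K * (x - u)) * (v - u)" by auto
    have "x \<in> S" using x sub1 by auto
    have "\<bar>x - u\<bar> = x - u" using x by auto
    with b1[OF \<open>x \<in> S\<close>] have "f1 x - f1 u - K * (x - u) \<le> 0" by linarith
    moreover have "v - u \<ge> 0" using less by simp
    ultimately have "(f1 x - f1 u - K * (x - u)) * (v - u) \<le> 0" by (rule mult_nonpos_nonneg)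
    then have "phi v \<le> phi u" using x(2) by linarith
    moreover have "phi u = 0" by (simp add: phi_def)
    ultimately show ?thesis unfolding phi_def by linarith
  next
    case equal then show ?thesis by simp
  next
    case greater
    have "\<exists>x\<in>{v<..<u}. phi u - phi v = (\<lambda>h. (f1 x - f1 u - K * (x - u)) * h) (u - v)"
    proof (rule mvt_simple[OF greater])
      fix x assume "v \<le> x" "x \<le> u"
      then have xS: "x \<in> S" using sub1 by auto
      have "{v..u} \<subseteq> S" using sub1 by auto
      from has_derivative_subset[OF dphi[OF xS, unfolded has_field_derivative_def] this]
      show "(phi has_derivative (\<lambda>h. (f1 x - f1 u - K * (x - u)) * h)) (at x within {v..u})"
        .
    qed
    then obtain x where x: "x \<in> {v<..<u}" "phi u - phi v = (f1 x - f1 u - K * (x - u)) * (u - v)" by auto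
    have "x \<in> S" using x sub1 by auto
    have "\<bar>x - u\<bar> = u - x" using x by auto
    with b1[OF \<open>x \<in> S\<close>] have "f1 x - f1 u - K * (x - u) \<ge> 0" by (simp add: algebra_simps)
    moreover have "u - v \<ge> 0" using greater by simp
    ultimately have "(f1 x - f1 u - K * (x - u)) * (u - v) \<ge> 0" by (rule mult_nonneg_nonneg)
    then have "phi v \<le> phi u" using x(2) by linarith
    moreover have "phi u = 0" by (simp add: phi_def)
    ultimately show ?thesis unfolding phi_def by linarith
  qed
qed


lemma T2_abs:
  fixes f f1 f2 :: "real \<Rightarrow> real"
  assumes S: "is_interval S"
    and d1: "\<And>t. t\<in>S \<Longrightarrow> (f has_real_derivative f1 t) (at t within S)"
    and d2: "\<And>t. t\<in>S \<Longrightarrow> (f1 has_real_derivative f2 t) (at t within S)"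
    and K: "\<And>t. t\<in>S \<Longrightarrow> \<bar>f2 t\<bar> \<le> K"
    and u: "u \<in> S" and v: "v \<in> S"
  shows "\<bar>f v - f u - f1 u * (v - u)\<bar> \<le> K * (v - u)^2 / 2"
proof -
  have A: "f v - f u - f1 u * (v - u) \<le> K * (v - u)^2 / 2"
    by (rule T2_pos[OF S d1 d2 K u v])
  have "(\<lambda>t. - f t) v - (\<lambda>t. - f t) u - (\<lambda>t. - f1 t) u * (v - u) \<le> K * (v - u)^2 / 2"
  proof (rule T2_pos[OF S _ _ _ u v])
    fix t assume "t \<in> S"
    show "((\<lambda>t. - f t) has_real_derivative - f1 t) (at t within S)"
      by (rule DERIV_minus[OF d1[OF \<open>t \<in> S\<close>]])
    show "((\<lambda>t. - f1 t) has_real_derivative - f2 t) (at t within S)"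
      by (rule DERIV_minus[OF d2[OF \<open>t \<in> S\<close>]])
    show "\<bar>- f2 t\<bar> \<le> K" using K[OF \<open>t \<in> S\<close>] by simp
  qed
  then have B: "- (f v - f u - f1 u * (v - u)) \<le> K * (v - u)^2 / 2" by (simp add: algebra_simps)
  from A B show ?thesis by linarith
qed

lemma curve_taylor:
  fixes g g1 g2 :: "real \<Rightarrow> real^2"
  assumes S: "is_interval S"
    and d1: "\<forall>t\<in>S. (g has_vector_derivative g1 t) (at t within S)"
    and d2: "\<forall>t\<in>S. (g1 has_vector_derivative g2 t) (at t within S)"
    and K: "\<forall>t\<in>S. norm (g2 t) \<le> K"
    and u: "u \<in> S" and v: "v \<in> S" and w: "norm w = 1"
  shows "\<bar>(g v - g u) \<bullet> w - (g1 u \<bullet> w) * (v - u)\<bar> \<le> K * (v - u)^2 / 2"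
proof -
  have "\<bar>(\<lambda>t. g t \<bullet> w) v - (\<lambda>t. g t \<bullet> w) u - (\<lambda>t. g1 t \<bullet> w) u * (v - u)\<bar> \<le> K * (v - u)^2 / 2"
  proof (rule T2_abs[OF S _ _ _ u v])
    fix t assume t: "t \<in> S"
    show "((\<lambda>t. g t \<bullet> w) has_real_derivative g1 t \<bullet> w) (at t within S)"
      unfolding has_real_derivative_iff_has_vector_derivative
      using bounded_linear.has_vector_derivative[OF bounded_linear_inner_left d1[rule_format, OF t]] .
    show "((\<lambda>t. g1 t \<bullet> w) has_real_derivative g2 t \<bullet> w) (at t within S)"
      unfolding has_real_derivative_iff_has_vector_derivative
      using bounded_linear.has_vector_derivative[OF bounded_linear_inner_left d2[rule_format, OF t]] .
    have "\<bar>g2 t \<bullet> w\<bar> \<le> norm (g2 t) * norm w" by (rule Cauchy_Schwarz_ineq2)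
    then show "\<bar>g2 t \<bullet> w\<bar> \<le> K" using K t w by auto
  qed
  then show ?thesis by (simp add: inner_diff_left)
qed

lemma point_bound:
  fixes d b n T :: "real^2" and kappa h :: real
  assumes bn: "\<bar>b \<bullet> n\<bar> \<le> kappa * h^2 / 2"
    and bT: "\<bar>b \<bullet> T - h\<bar> \<le> kappa * h^2 / 2"
    and T: "norm T = 1" and n: "norm n = 1" and k: "kappa \<ge> 0"
    and kh: "kappa * \<bar>h\<bar> \<le> 1"
    and cl: "norm (d - b) \<le> norm d"
  shows "\<bar>((d - b) \<bullet> n)^2 - (d \<bullet> n)^2\<bar> \<le> 16 * kappa * norm d ^ 3 + 64 * kappa^2 * norm d ^ 4"
proof -
  define H where "H = \<bar>h\<bar>"
  have H0: "H \<ge> 0" by (simp add: H_def)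
  have hH: "h^2 = H^2" by (simp add: H_def)
  have "\<bar>b \<bullet> T\<bar> \<le> norm b * norm T" by (rule Cauchy_Schwarz_ineq2)
  then have bTb: "\<bar>b \<bullet> T\<bar> \<le> norm b" using T by simp
  have kH: "kappa * H^2 \<le> H"
  proof -
    have "kappa * H^2 = (kappa * H) * H" by (simp add: power2_eq_square)
    also have "\<dots> \<le> 1 * H" using kh H0 unfolding H_def by (intro mult_right_mono) auto
    finally show ?thesis by simp
  qed
  have gen: "\<And>x y e::real. \<bar>x - y\<bar> \<le> e \<Longrightarrow> \<bar>y\<bar> \<le> \<bar>x\<bar> + e" by arith
  have "H \<le> \<bar>b \<bullet> T\<bar> + kappa * H^2 / 2" using gen[OF bT] unfolding H_def by simp
  then have Hb: "H \<le> 2 * norm b" using bTb kH by linarith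
  have "norm b \<le> norm (d - b) + norm d" by (metis norm_minus_commute norm_triangle_sub add.commute)
  then have bd: "norm b \<le> 2 * norm d" using cl by linarith
  have H4: "H \<le> 4 * norm d" using Hb bd by linarith
  have "H^2 \<le> (4 * norm d)^2" using H4 H0 by (intro power_mono) auto
  then have "kappa * H^2 / 2 \<le> kappa * (4 * norm d)^2 / 2" using k by (intro divide_right_mono mult_left_mono) auto
  then have bn8: "\<bar>b \<bullet> n\<bar> \<le> 8 * kappa * norm d ^ 2" using bn hH by (simp add: power_mult_distrib)
  have "\<bar>d \<bullet> n\<bar> \<le> norm d * norm n" by (rule Cauchy_Schwarz_ineq2)
  then have dn: "\<bar>d \<bullet> n\<bar> \<le> norm d" using n by simp
  have eq: "((d - b) \<bullet> n)^2 - (d \<bullet> n)^2 = (b \<bullet> n)^2 - 2 * (d \<bullet> n) * (b \<bullet> n)"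
    by (simp add: inner_diff_left power2_eq_square algebra_simps)
  have "\<bar>(b \<bullet> n)^2 - 2 * (d \<bullet> n) * (b \<bullet> n)\<bar> \<le> \<bar>(b \<bullet> n)^2\<bar> + \<bar>2 * (d \<bullet> n) * (b \<bullet> n)\<bar>"
    by (rule abs_triangle_ineq4)
  also have "\<dots> = \<bar>b \<bullet> n\<bar>^2 + 2 * \<bar>d \<bullet> n\<bar> * \<bar>b \<bullet> n\<bar>"
    by (simp add: abs_mult)
  also have "\<dots> \<le> (8 * kappa * norm d ^ 2)^2 + 2 * norm d * (8 * kappa * norm d ^ 2)"
    using bn8 dn by (intro add_mono power_mono mult_mono) auto
  also have "\<dots> = 16 * kappa * norm d ^ 3 + 64 * kappa^2 * norm d ^ 4"
    by (simp add: power2_eq_square power3_eq_cube power4_eq_xxxx algebra_simps)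
  finally show ?thesis using eq by simp
qed


theorem theorem1:
  fixes M N :: nat and D :: "nat \<Rightarrow> real set"
    and gam gam1 gam2 :: "nat \<Rightarrow> real \<Rightarrow> real^2" and kappa :: real
    and a n :: "nat \<Rightarrow> real^2" and cv :: "nat \<Rightarrow> nat" and s :: "nat \<Rightarrow> real"
    and xR :: real and xT :: "real^2" and p :: "nat \<Rightarrow> nat"
  assumes env: "environment M D gam gam1 gam2 kappa"
    and cloud: "point_cloud M D gam gam1 N a cv s n"
    and match: "closest_matching N a xR xT p"
    and same_curve: "\<forall>i<N. cv (p i) = cv i"
    and close: "\<forall>i<N. kappa * \<bar>s i - s (p i)\<bar> \<le> 1"
  shows "\<bar>J_ICP N a n p xR xT - J_fix N a n xR xT\<bar>
           \<le> (\<Sum>i<N. 16 * kappa * norm (disp xR xT (a i)) ^ 3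
                     + 64 * kappa ^ 2 * norm (disp xR xT (a i)) ^ 4)
         \<and> (kappa = 0 \<longrightarrow> J_ICP N a n p xR xT = J_fix N a n xR xT)"
proof -
  let ?d = "\<lambda>i. disp xR xT (a i)"
  let ?B = "\<lambda>i. 16 * kappa * norm (?d i) ^ 3 + 64 * kappa ^ 2 * norm (?d i) ^ 4"
  have k0: "kappa \<ge> 0" using env unfolding environment_def by simp
  have each: "\<bar>((a i + ?d i - a (p i)) \<bullet> n i)^2 - (?d i \<bullet> n i)^2\<bar> \<le> ?B i" if i: "i < N" for i
  proof -
    define c where "c = cv i"
    define u where "u = s i"
    define v where "v = s (p i)"
    have pi: "p i < N" using match i unfolding closest_matching_def by simp
    have cM: "c < M" and uD: "u \<in> D c" and ai: "a i = gam c u" and nn: "norm (n i) = 1"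
      and nT: "n i \<bullet> gam1 c u = 0"
      using cloud i unfolding point_cloud_def c_def u_def by auto
    have vD: "v \<in> D c" and api: "a (p i) = gam c v"
      using cloud pi same_curve i unfolding point_cloud_def c_def v_def by auto
    have envc: "is_interval (D c)"
        "\<forall>t\<in>D c. (gam c has_vector_derivative gam1 c t) (at t within D c)"
        "\<forall>t\<in>D c. (gam1 c has_vector_derivative gam2 c t) (at t within D c)"
        "\<forall>t\<in>D c. norm (gam1 c t) = 1"
        "\<forall>t\<in>D c. norm (gam2 c t) \<le> kappa"
      using env cM unfolding environment_def by auto
    define b where "b = a (p i) - a i"
    have Tn: "norm (gam1 c u) = 1" using envc(4) uD by simp
    have bn0: "\<bar>b \<bullet> n i - (gam1 c u \<bullet> n i) * (v - u)\<bar> \<le> kappa * (v - u)^2 / 2"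
      unfolding b_def ai api by (rule curve_taylor[OF envc(1) envc(2) envc(3) envc(5) uD vD nn])
    have bn: "\<bar>b \<bullet> n i\<bar> \<le> kappa * (v - u)^2 / 2"
      using bn0 nT by (simp add: inner_commute)
    have bT0: "\<bar>b \<bullet> gam1 c u - (gam1 c u \<bullet> gam1 c u) * (v - u)\<bar> \<le> kappa * (v - u)^2 / 2"
      unfolding b_def ai api by (rule curve_taylor[OF envc(1) envc(2) envc(3) envc(5) uD vD Tn])
    have "gam1 c u \<bullet> gam1 c u = 1" using Tn power2_norm_eq_inner[of "gam1 c u"] by simp
    then have bT: "\<bar>b \<bullet> gam1 c u - (v - u)\<bar> \<le> kappa * (v - u)^2 / 2" using bT0 by simp
    have kh: "kappa * \<bar>v - u\<bar> \<le> 1" using close i unfolding u_def v_def by (simp add: abs_minus_commute)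
    have "norm (a i + ?d i - a (p i)) \<le> norm (a i + ?d i - a i)"
      using match i unfolding closest_matching_def by blast
    then have cl: "norm (?d i - b) \<le> norm (?d i)" unfolding b_def by (simp add: algebra_simps)
    have eqd: "a i + ?d i - a (p i) = ?d i - b" unfolding b_def by (simp add: algebra_simps)
    show ?thesis unfolding eqd
      by (rule point_bound[OF bn bT Tn nn k0 kh cl])
  qed
  have "\<bar>J_ICP N a n p xR xT - J_fix N a n xR xT\<bar>
        = \<bar>\<Sum>i<N. ((a i + ?d i - a (p i)) \<bullet> n i)^2 - (?d i \<bullet> n i)^2\<bar>"
    unfolding J_ICP_def J_fix_def by (simp add: sum_subtractf)
  also have "\<dots> \<le> (\<Sum>i<N. \<bar>((a i + ?d i - a (p i)) \<bullet> n i)^2 - (?d i \<bullet> n i)^2\<bar>)"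
    by (rule sum_abs)
  also have "\<dots> \<le> (\<Sum>i<N. ?B i)"
    by (rule sum_mono) (use each in auto)
  finally have main: "\<bar>J_ICP N a n p xR xT - J_fix N a n xR xT\<bar> \<le> (\<Sum>i<N. ?B i)" .
  moreover have "kappa = 0 \<longrightarrow> J_ICP N a n p xR xT = J_fix N a n xR xT"
  proof
    assume "kappa = 0"
    with main have "\<bar>J_ICP N a n p xR xT - J_fix N a n xR xT\<bar> \<le> 0" by simp
    then show "J_ICP N a n p xR xT = J_fix N a n xR xT" by simp
  qed
  ultimately show ?thesis by blast
qed

end
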